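(* Let $A\in\mathbb{R}^{d\times d}$, $B\in\mathbb{R}^{d\times n}$, $M=\begin{bmatrix}Q&S^*\\S&R\end{bmatrix}$ symmetric with $Q\in\mathbb{R}^{d\times d}$, $S\in\mathbb{R}^{n\times d}$, $R\in\mathbb{R}^{n\times n}$, and let $\rho>0$, $\delta\ge0$. For $\lambda\ge0$ set \[ M(\delta,\lambda)=\begin{bmatrix} Q & S^* & 0\\ S & R+\lambda\delta^2 I & 0\\ 0&0&-\lambda I\end{bmatrix},\qquad B_2=\begin{bmatrix} B & B\end{bmatrix}\in\mathbb{R}^{d\times 2n}. \] If there exists $N\in\mathbb{R}^{n\times d}$ such that $A+BN$ is $\rho$-Schur and $Q+2\,\Re\,S^*N+N^*RN\ge0$, then $(A,B_2,M(\delta,\lambda))$ is $\rho$-minimally stable for every $\lambda\ge0$.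
   Context: For a triple $(\mathcal{A},\mathcal{B},\mathcal{M})$ with $\mathcal{A}\in\mathbb{R}^{d\times d}$, $\mathcal{B}\in\mathbb{R}^{d\times q}$ and symmetric $\mathcal{M}=\begin{bmatrix}Q'&S'^*\\S'&R'\end{bmatrix}\in\mathbb{R}^{(d+q)\times(d+q)}$: sequences $(x,w)$ with $x(k)\in\mathbb{R}^d$, $w(k)\in\mathbb{R}^q$ lie in $\mathcal{B}(\mathcal{A},\mathcal{B})$ if $x(k+1)=\mathcal{A}x(k)+\mathcal{B}w(k)$, and in $\mathrm{IQC}(\mathcal{M},\rho)$ if $\sum_{k=0}^N\rho^{-2k}(\langle Q'x(k),x(k)\rangle+2\langle S'x(k),w(k)\rangle+\langle R'w(k),w(k)\rangle)\ge0$ for all $N\ge0$. The triple is $\rho$-minimally stable if for every $x_0\in\mathbb{R}^d$ there is $(x,w)\in\mathcal{B}(\mathcal{A},\mathcal{B})\cap\mathrm{IQC}(\mathcal{M},\rho)$ with $x(0)=x_0$ and $\rho^{-k}x(k)\to0$. For $(A,B_2,M(\delta,\lambda))$ the input is $w=(u,e)\in\mathbb{R}^{2n}$. A square matrix is $\rho$-Schur if its eigenvalues lie in the open disk of radius $\rho$. *)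

theory Defs
  imports "HOL-Analysis.Analysis"
begin

text \<open>Matrices are rendered with type-indexed dimensions: real^'d^'d is d x d,
  real^'q^'d is d x q (d rows, q columns). The symmetric matrix
  M = [Q' S'^*; S' R'] is represented by its blocks Q', S', R'.\<close>

definition behav :: "real^'d^'d \<Rightarrow> real^'q^'d \<Rightarrow> (nat \<Rightarrow> real^'d) \<Rightarrow> (nat \<Rightarrow> real^'q) \<Rightarrow> bool" where
  "behav A B x w \<longleftrightarrow> (\<forall>k. x (Suc k) = A *v x k + B *v w k)"

definition IQC :: "real^'d^'d \<Rightarrow> real^'d^'q \<Rightarrow> real^'q^'q \<Rightarrow> real
    \<Rightarrow> (nat \<Rightarrow> real^'d) \<Rightarrow> (nat \<Rightarrow> real^'q) \<Rightarrow> bool" where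
  "IQC Q' S' R' \<rho> x w \<longleftrightarrow>
     (\<forall>N. 0 \<le> (\<Sum>k\<le>N. inverse (\<rho> ^ (2*k)) *
        ((Q' *v x k) \<bullet> x k + 2 * ((S' *v x k) \<bullet> w k) + (R' *v w k) \<bullet> w k)))"

definition min_stable :: "real \<Rightarrow> real^'d^'d \<Rightarrow> real^'q^'d \<Rightarrow> real^'d^'d \<Rightarrow> real^'d^'q \<Rightarrow> real^'q^'q \<Rightarrow> bool" where
  "min_stable \<rho> A B Q' S' R' \<longleftrightarrow>
     (\<forall>x0. \<exists>x w. behav A B x w \<and> IQC Q' S' R' \<rho> x w \<and> x 0 = x0 \<and>
        ((\<lambda>k. inverse (\<rho> ^ k) *\<^sub>R x k) \<longlonglongrightarrow> 0))"

definition cmat :: "real^'n^'m \<Rightarrow> complex^'n^'m" where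
  "cmat A = (\<chi> i j. complex_of_real (A $ i $ j))"

text \<open>rho-Schur: every (complex) eigenvalue lies in the open disk of radius rho.\<close>
definition rho_schur :: "real \<Rightarrow> real^'d^'d \<Rightarrow> bool" where
  "rho_schur \<rho> A \<longleftrightarrow>
     (\<forall>(c::complex) v. v \<noteq> 0 \<and> cmat A *v v = c *s v \<longrightarrow> cmod c < \<rho>)"

definition psd :: "real^'d^'d \<Rightarrow> bool" where
  "psd P \<longleftrightarrow> (\<forall>x. 0 \<le> x \<bullet> (P *v x))"

text \<open>Input w = (u,e) in R^{2n}, indexed by 'n + 'n (Inl: u, Inr: e).\<close>
definition B2 :: "real^'n^'d \<Rightarrow> real^('n + 'n)^'d" where
  "B2 B = (\<chi> i j. case j of Inl k \<Rightarrow> B $ i $ k | Inr k \<Rightarrow> B $ i $ k)"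

definition S2 :: "real^'d^'n \<Rightarrow> real^'d^('n + 'n)" where
  "S2 S = (\<chi> i j. case i of Inl k \<Rightarrow> S $ k $ j | Inr k \<Rightarrow> 0)"

definition R2 :: "real^'n^'n \<Rightarrow> real \<Rightarrow> real \<Rightarrow> real^('n + 'n)^('n + 'n)" where
  "R2 R \<delta> lam = (\<chi> i j. case (i, j) of
       (Inl a, Inl b) \<Rightarrow> R $ a $ b + lam * \<delta>^2 * (if a = b then 1 else 0)
     | (Inr a, Inr b) \<Rightarrow> - lam * (if a = b then 1 else 0)
     | _ \<Rightarrow> 0)"

end

theory Submission
  imports Defs "Jordan_Normal_Form.Spectral_Radius"
begin

no_notation vec_index (infixl "$" 100)
no_notation scalar_prod (infix "\<bullet>" 70)

notation vec_index (infixl "$v" 100)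
notation scalar_prod (infix "\<bullet>v" 70)

definition tm :: "(nat \<Rightarrow> 'd::finite) \<Rightarrow> complex^'d^'d \<Rightarrow> complex mat" where
  "tm f C = mat CARD('d) CARD('d) (\<lambda>(i,j). C $ f i $ f j)"
definition tv :: "(nat \<Rightarrow> 'd::finite) \<Rightarrow> complex^'d \<Rightarrow> complex Matrix.vec" where
  "tv f v = Matrix.vec CARD('d) (\<lambda>i. v $ f i)"

lemma tm_carrier: "tm f (C::complex^'d::finite^'d) \<in> carrier_mat CARD('d) CARD('d)"
  by (simp add: tm_def)
lemma tv_carrier: "tv f (v::complex^'d) \<in> carrier_vec CARD('d)"
  by (simp add: tv_def)

lemma tv_mult:
  assumes f: "bij_betw f {0..<CARD('d)} (UNIV::'d::finite set)"
  shows "tv f (C *v v) = tm f C *\<^sub>v tv f (v::complex^'d)"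
proof (rule eq_vecI)
  show "dim_vec (tv f (C *v v)) = dim_vec (tm f C *\<^sub>v tv f v)" by (simp add: tv_def tm_def)
  fix i assume "i < dim_vec (tm f C *\<^sub>v tv f v)"
  hence i: "i < CARD('d)" by (simp add: tm_def)
  have "(tm f C *\<^sub>v tv f v) $v i = (\<Sum>j\<in>{0..<CARD('d)}. C $ f i $ f j * v $ f j)"
    using i by (simp add: tm_def tv_def scalar_prod_def)
  also have "\<dots> = (\<Sum>d\<in>UNIV. C $ f i $ d * v $ d)"
    by (rule sum.reindex_bij_betw[OF f])
  also have "\<dots> = tv f (C *v v) $v i"
    using i by (simp add: tv_def matrix_vector_mult_def)
  finally show "tv f (C *v v) $v i = (tm f C *\<^sub>v tv f v) $v i" by simp
qed

lemma tv_pow: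
  assumes f: "bij_betw f {0..<CARD('d)} (UNIV::'d::finite set)"
  shows "tv f (((\<lambda>v. C *v v) ^^ k) v) = (tm f C ^\<^sub>m k) *\<^sub>v tv f (v::complex^'d)"
proof (induction k arbitrary: v)
  case 0
  then show ?case using tv_carrier[of f v] by (simp add: tm_def)
next
  case (Suc k)
  have "tv f (((\<lambda>v. C *v v) ^^ Suc k) v) = tv f (((\<lambda>v. C *v v) ^^ k) (C *v v))"
    by (simp add: funpow_Suc_right del: funpow.simps)
  also have "\<dots> = (tm f C ^\<^sub>m k) *\<^sub>v (tm f C *\<^sub>v tv f v)"
    using Suc tv_mult[OF f] by simp
  also have "\<dots> = (tm f C ^\<^sub>m Suc k) *\<^sub>v tv f v"
    using assoc_mult_mat_vec[OF pow_carrier_mat[OF tm_carrier[of f C]] tm_carrier[of f C] tv_carrier[of f v], of k]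
    by simp
  finally show ?case .
qed

lemma tv_inj:
  assumes f: "bij_betw f {0..<CARD('d)} (UNIV::'d::finite set)"
  and "tv f a = tv f (b::complex^'d)"
  shows "a = b"
proof -
  have "a $ d = b $ d" for d :: 'd
  proof -
  obtain i where i: "i < CARD('d)" "d = f i" using f unfolding bij_betw_def by force
  have "tv f a $v i = tv f b $v i" using assms by simp
  thus "a $ d = b $ d" using i by (simp add: tv_def)
  qed
  thus ?thesis by (simp add: Finite_Cartesian_Product.vec_eq_iff)
qed

lemma eig_transfer:
  assumes f: "bij_betw f {0..<CARD('d)} (UNIV::'d::finite set)"
  and ev: "eigenvalue (tm f C) c"
  shows "\<exists>cv::complex^'d. cv \<noteq> 0 \<and> C *v cv = c *s cv"
proof -
  obtain v where v: "v \<in> carrier_vec CARD('d)" "v \<noteq> 0\<^sub>v CARD('d)" "tm f C *\<^sub>v v = c \<cdot>\<^sub>v v"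
    using ev unfolding eigenvalue_def eigenvector_def by (auto simp: tm_def)
  define g where "g = the_inv_into {0..<CARD('d)} f"
  have g: "g d < CARD('d)" "f (g d) = d" for d
  proof -
    have inj: "inj_on f {0..<CARD('d)}" and im: "d \<in> f ` {0..<CARD('d)}"
      using f by (auto simp: bij_betw_def)
    show "g d < CARD('d)" using the_inv_into_into[OF inj im, of "{0..<CARD('d)}"]
      unfolding g_def by simp
    show "f (g d) = d" unfolding g_def using f_the_inv_into_f[OF inj im] .
  qed
  have gf: "g (f i) = i" if "i < CARD('d)" for i
    using f that unfolding g_def by (simp add: bij_betw_def the_inv_into_f_f)
  define cv where "cv = (\<chi> d. v $v g d)"
  have tvcv: "tv f cv = v"
    using v(1) by (intro eq_vecI) (auto simp: tv_def cv_def gf)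
  have "tv f (C *v cv) = tv f (c *s cv)"
  proof -
    have "tv f (C *v cv) = c \<cdot>\<^sub>v v" using tv_mult[OF f] tvcv v(3) by simp
    also have "\<dots> = tv f (c *s cv)"
      using v(1) by (intro eq_vecI) (auto simp: tv_def cv_def gf)
    finally show ?thesis .
  qed
  hence "C *v cv = c *s cv" by (rule tv_inj[OF f])
  moreover have "cv \<noteq> 0"
  proof
    assume "cv = 0"
    hence "tv f cv = 0\<^sub>v CARD('d)" by (intro eq_vecI) (auto simp: tv_def)
    thus False using tvcv v(2) by simp
  qed
  ultimately show ?thesis by blast
qed



lemma smult_mat_vec:
  "A \<in> carrier_mat n m \<Longrightarrow> v \<in> carrier_vec m \<Longrightarrow> (k \<cdot>\<^sub>m A) *\<^sub>v v = (k::complex) \<cdot>\<^sub>v (A *\<^sub>v v)"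
  by (intro eq_vecI) auto

lemma smult_pow_mat:
  assumes A: "A \<in> carrier_mat n n"
  shows "((a::complex) \<cdot>\<^sub>m A) ^\<^sub>m k = a ^ k \<cdot>\<^sub>m (A ^\<^sub>m k)"
proof (induction k)
  case 0
  then show ?case using A by (intro eq_matI) auto
next
  case (Suc k)
  have "(a \<cdot>\<^sub>m A) ^\<^sub>m Suc k = (a ^ k \<cdot>\<^sub>m (A ^\<^sub>m k)) * (a \<cdot>\<^sub>m A)"
    using Suc by simp
  also have "\<dots> = a ^ k \<cdot>\<^sub>m ((A ^\<^sub>m k) * (a \<cdot>\<^sub>m A))"
    using A by (intro mult_smult_assoc_mat) auto
  also have "\<dots> = a ^ k \<cdot>\<^sub>m (a \<cdot>\<^sub>m ((A ^\<^sub>m k) * A))"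
    using A by (subst mult_smult_distrib) auto
  also have "\<dots> = a ^ Suc k \<cdot>\<^sub>m (A ^\<^sub>m Suc k)"
    using A by (intro eq_matI) auto
  finally show ?case .
qed

lemma decay_complex:
  fixes C :: "complex^'d::finite^'d" and w :: "complex^'d"
  assumes sch: "\<forall>c v. v \<noteq> 0 \<and> C *v v = c *s v \<longrightarrow> cmod c < \<rho>"
  shows "\<exists>K r. 0 < r \<and> r < \<rho> \<and> (\<forall>k d. cmod ((((\<lambda>v. C *v v)^^k) w) $ d) \<le> K * r^k)"
proof -
  obtain f where f: "bij_betw f {0..<CARD('d)} (UNIV::'d set)"
    using ex_bij_betw_nat_finite[of "UNIV::'d set"] by auto
  define n where "n = CARD('d)"
  have n: "n > 0" unfolding n_def by simp
  define M where "M = tm f C"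
  have Mc: "M \<in> carrier_mat n n" unfolding M_def n_def by (rule tm_carrier)
  have eig: "cmod c < \<rho>" if "eigenvalue M c" for c
    using eig_transfer[OF f that[unfolded M_def]] sch by blast
  define sr where "sr = spectral_radius M"
  have "sr \<in> norm ` spectrum M" unfolding sr_def by (rule spectral_radius_mem_max(1)[OF Mc n])
  then obtain e where e: "eigenvalue M e" "sr = cmod e" unfolding spectrum_def by auto
  have sr: "sr < \<rho>" "0 \<le> sr" using eig[OF e(1)] e(2) by auto
  define r where "r = (sr + \<rho>) / 2"
  have r: "0 < r" "r < \<rho>" "sr < r" using sr unfolding r_def by auto
  define D where "D = complex_of_real (inverse r) \<cdot>\<^sub>m M"
  have Dc: "D \<in> carrier_mat n n" using Mc unfolding D_def by simp
  have MD: "M = complex_of_real r \<cdot>\<^sub>m D"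
    unfolding D_def using Mc r(1) by (intro eq_matI) auto
  have "spectral_radius D < 1"
  proof -
    have "spectral_radius D \<in> norm ` spectrum D" by (rule spectral_radius_mem_max(1)[OF Dc n])
    then obtain ev where ev: "eigenvalue D ev" "spectral_radius D = cmod ev"
      unfolding spectrum_def by auto
    then obtain v where v: "v \<in> carrier_vec n" "v \<noteq> 0\<^sub>v n" "D *\<^sub>v v = ev \<cdot>\<^sub>v v"
      unfolding eigenvalue_def eigenvector_def using Dc by auto
    have "M *\<^sub>v v = (complex_of_real r * ev) \<cdot>\<^sub>v v"
      unfolding MD using smult_mat_vec[OF Dc v(1)] v(3) by (simp add: smult_smult_assoc)
    hence "eigenvalue M (complex_of_real r * ev)"
      unfolding eigenvalue_def eigenvector_def using v Mc by auto
    hence "norm (complex_of_real r * ev) \<le> sr"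
      unfolding sr_def by (intro spectral_radius_mem_max(2)[OF Mc n]) (auto simp: spectrum_def)
    hence "r * cmod ev \<le> sr" using r(1) by (simp add: norm_mult)
    hence "r * cmod ev < r * 1" using r by linarith
    hence "cmod ev < 1" using r(1) by (simp only: mult_less_cancel_left_pos)
    thus ?thesis using ev(2) by simp
  qed
  then obtain c where c: "\<forall>k. norm_bound (D ^\<^sub>m k) c"
    using spectral_radius_jnf_norm_bound_less_1_upper_triangular[OF Dc] by blast
  have ent: "cmod ((M ^\<^sub>m k) $$ (i,j)) \<le> r^k * c" if "i < n" "j < n" for i j k
  proof -
    have "M ^\<^sub>m k = (complex_of_real r)^k \<cdot>\<^sub>m (D ^\<^sub>m k)"
      unfolding MD by (rule smult_pow_mat[OF Dc])
    hence "(M ^\<^sub>m k) $$ (i,j) = (complex_of_real r)^k * (D ^\<^sub>m k) $$ (i,j)"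
      using that Dc by simp
    hence "cmod ((M ^\<^sub>m k) $$ (i,j)) = r^k * cmod ((D ^\<^sub>m k) $$ (i,j))"
      using r(1) by (simp add: norm_mult norm_power)
    also have "\<dots> \<le> r^k * c"
      using c[rule_format, of k, unfolded norm_bound_def] that Dc r(1)
      by (intro mult_left_mono) auto
    finally show ?thesis .
  qed
  define W where "W = (\<Sum>j\<in>{0..<n}. cmod (w $ f j))"
  show ?thesis
  proof (intro exI conjI allI)
    show "0 < r" "r < \<rho>" by (fact r)+
    fix k d
    obtain i where i: "i < n" "d = f i" using f unfolding bij_betw_def n_def by force
    have "(((\<lambda>v. C *v v)^^k) w) $ d = tv f (((\<lambda>v. C *v v)^^k) w) $v i"
      using i unfolding tv_def n_def by simp
    also have "\<dots> = ((M ^\<^sub>m k) *\<^sub>v tv f w) $v i"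
      unfolding M_def by (simp add: tv_pow[OF f])
    also have "\<dots> = (\<Sum>j\<in>{0..<n}. (M ^\<^sub>m k) $$ (i,j) * w $ f j)"
      using i Mc unfolding tv_def n_def by (simp add: scalar_prod_def)
    finally have eq: "(((\<lambda>v. C *v v)^^k) w) $ d = (\<Sum>j\<in>{0..<n}. (M ^\<^sub>m k) $$ (i,j) * w $ f j)" .
    have "cmod ((((\<lambda>v. C *v v)^^k) w) $ d) \<le> (\<Sum>j\<in>{0..<n}. cmod ((M ^\<^sub>m k) $$ (i,j) * w $ f j))"
      unfolding eq by (rule norm_sum)
    also have "\<dots> \<le> (\<Sum>j\<in>{0..<n}. r^k * c * cmod (w $ f j))"
      using ent[OF i(1)] by (intro sum_mono) (auto simp: norm_mult intro: mult_right_mono)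
    also have "\<dots> = (c * W) * r^k"
      unfolding W_def by (simp add: sum_distrib_left mult_ac)
    finally show "cmod ((((\<lambda>v. C *v v)^^k) w) $ d) \<le> (c * W) * r^k" .
  qed
qed



lemma cmat_mult:
  "(\<chi> i. complex_of_real ((C *v x) $ i)) = cmat C *v (\<chi> i. complex_of_real (x $ i))"
  by (simp add: Finite_Cartesian_Product.vec_eq_iff matrix_vector_mult_def cmat_def)

lemma cmat_iter:
  fixes C :: "real^'d::finite^'d" and x :: "real^'d"
  shows "(\<chi> i. complex_of_real ((((\<lambda>v. C *v v)^^k) x) $ i)) =
     ((\<lambda>v. cmat C *v v)^^k) (\<chi> i. complex_of_real (x $ i))"
proof (induction k)
  case 0
  show ?case by simp
next
  case (Suc k)
  have "(\<chi> i. complex_of_real ((((\<lambda>v. C *v v)^^Suc k) x) $ i)) =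
        cmat C *v (\<chi> i. complex_of_real ((((\<lambda>v. C *v v)^^k) x) $ i))"
    using cmat_mult[of C "((\<lambda>v. C *v v)^^k) x"] by simp
  also have "\<dots> = ((\<lambda>v. cmat C *v v)^^Suc k) (\<chi> i. complex_of_real (x $ i))"
    using Suc by simp
  finally show ?case .
qed

lemma decay_real:
  fixes C :: "real^'d::finite^'d"
  assumes sch: "rho_schur \<rho> C" and rho: "\<rho> > 0"
  shows "(\<lambda>k. inverse (\<rho> ^ k) *\<^sub>R ((\<lambda>v. C *v v)^^k) x0) \<longlonglongrightarrow> 0"
proof -
  obtain K r where Kr: "0 < r" "r < \<rho>"
    and b: "\<And>k d. cmod ((((\<lambda>v. cmat C *v v)^^k) (\<chi> i. complex_of_real (x0 $ i))) $ d) \<le> K * r^k"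
  proof -
    have "\<forall>c v. v \<noteq> 0 \<and> cmat C *v v = c *s v \<longrightarrow> cmod c < \<rho>"
      using sch unfolding rho_schur_def by blast
    from decay_complex[OF this, of "\<chi> i. complex_of_real (x0 $ i)"]
    show ?thesis by (elim exE conjE) (rule that, assumption+, blast)
  qed
  have bd: "\<bar>(((\<lambda>v. C *v v)^^k) x0) $ d\<bar> \<le> K * r^k" for k d
    using b[of k d] unfolding cmat_iter[symmetric] by simp
  have "norm (inverse (\<rho> ^ k) *\<^sub>R ((\<lambda>v. C *v v)^^k) x0) \<le> (CARD('d) * K) * (r / \<rho>)^k" for k
  proof -
    have "norm (inverse (\<rho> ^ k) *\<^sub>R ((\<lambda>v. C *v v)^^k) x0) =
          inverse (\<rho> ^ k) * norm (((\<lambda>v. C *v v)^^k) x0)" using rho by simp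
    also have "\<dots> \<le> inverse (\<rho> ^ k) * (\<Sum>d\<in>UNIV. \<bar>(((\<lambda>v. C *v v)^^k) x0) $ d\<bar>)"
      using rho by (intro mult_left_mono[OF norm_le_l1_cart]) simp
    also have "\<dots> \<le> inverse (\<rho> ^ k) * (\<Sum>d\<in>(UNIV::'d set). K * r^k)"
      using rho by (intro mult_left_mono sum_mono bd) auto
    also have "\<dots> = (CARD('d) * K) * (r / \<rho>)^k"
      using rho by (simp add: power_divide field_simps)
    finally show ?thesis .
  qed
  hence le: "eventually (\<lambda>k. norm (inverse (\<rho> ^ k) *\<^sub>R ((\<lambda>v. C *v v)^^k) x0) \<le> (CARD('d) * K) * (r / \<rho>)^k) sequentially"
    by (simp add: always_eventually)
  have lim: "(\<lambda>k. (CARD('d) * K) * (r / \<rho>)^k) \<longlonglongrightarrow> 0"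
    using Kr rho by (intro tendsto_mult_right_zero LIMSEQ_power_zero) auto
  show ?thesis by (rule Lim_null_comparison[OF le lim])
qed

lemma sum_Plus_UNIV:
  fixes f :: "('a::finite + 'b::finite) \<Rightarrow> 'c::comm_monoid_add"
  shows "sum f UNIV = sum (\<lambda>a. f (Inl a)) UNIV + sum (\<lambda>b. f (Inr b)) UNIV"
proof -
  have "sum f UNIV = sum f (UNIV <+> UNIV)" by simp
  also have "\<dots> = sum (f \<circ> Inl) UNIV + sum (f \<circ> Inr) UNIV" by (rule sum.Plus) auto
  finally show ?thesis by (simp add: comp_def)
qed

lemma inner_transpose: "(x::real^'a::finite) \<bullet> (transpose M *v y) = (M *v x) \<bullet> y"
  by (metis dot_lmul_matrix vector_transpose_matrix)

lemma inner_vmul: "(x::real^'a::finite) \<bullet> (z v* M) = (M *v x) \<bullet> z"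
  by (metis dot_lmul_matrix inner_commute)

theorem lemma2p13:
  fixes A :: "real^'d^'d" and B :: "real^'n^'d" and Q :: "real^'d^'d"
    and S :: "real^'d^'n" and R :: "real^'n^'n" and \<rho> \<delta> :: real
  assumes "transpose Q = Q" and "transpose R = R"
    and "\<rho> > 0" and "\<delta> \<ge> 0"
    and "\<exists>N :: real^'d^'n. rho_schur \<rho> (A + B ** N) \<and>
           psd (Q + (transpose S ** N + transpose N ** S) + transpose N ** R ** N)"
  shows "\<forall>lam\<ge>0. min_stable \<rho> A (B2 B) Q (S2 S) (R2 R \<delta> lam)"
proof (intro allI impI)
  fix lam :: real assume lam: "lam \<ge> 0"
  obtain N :: "real^'d^'n" where N: "rho_schur \<rho> (A + B ** N)"
    and P: "psd (Q + (transpose S ** N + transpose N ** S) + transpose N ** R ** N)"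
    using assms(5) by blast
  define Cr where "Cr = A + B ** N"
  show "min_stable \<rho> A (B2 B) Q (S2 S) (R2 R \<delta> lam)"
    unfolding min_stable_def
  proof
    fix x0 :: "real^'d"
    define x where "x = (\<lambda>k. ((\<lambda>v. Cr *v v)^^k) x0)"
    define w where "w = (\<lambda>k. (\<chi> j. case j of Inl a \<Rightarrow> (N *v x k) $ a | Inr a \<Rightarrow> 0) :: real^('n+'n))"
    have Bw: "B2 B *v w k = B *v (N *v x k)" for k
      by (simp add: Finite_Cartesian_Product.vec_eq_iff matrix_vector_mult_def B2_def w_def
          sum_Plus_UNIV)
    have beh: "behav A (B2 B) x w"
      unfolding behav_def
    proof
      fix k
      show "x (Suc k) = A *v x k + B2 B *v w k"
        unfolding Bw by (simp add: x_def Cr_def matrix_vector_mult_add_rdistrib matrix_vector_mul_assoc)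
    qed
    have tnn: "0 \<le> (Q *v x k) \<bullet> x k + 2 * ((S2 S *v x k) \<bullet> w k) + (R2 R \<delta> lam *v w k) \<bullet> w k" for k
    proof -
      define y where "y = x k"
      define u where "u = N *v y"
      have t1: "(S2 S *v y) \<bullet> w k = (S *v y) \<bullet> u"
        by (simp add: inner_vec_def sum_Plus_UNIV matrix_vector_mult_def S2_def w_def u_def y_def)
      have Rw: "(R2 R \<delta> lam *v w k) $ Inl a = (R *v u) $ a + lam * \<delta>^2 * u $ a" for a
      proof -
        have "(R2 R \<delta> lam *v w k) $ Inl a = (\<Sum>b\<in>UNIV. (R $ a $ b + lam * \<delta>^2 * (if a = b then 1 else 0)) * u $ b)"
          by (simp add: matrix_vector_mult_def sum_Plus_UNIV R2_def w_def u_def y_def)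
        also have "\<dots> = (\<Sum>b\<in>UNIV. R $ a $ b * u $ b) + (\<Sum>b\<in>UNIV. lam * \<delta>^2 * (if a = b then 1 else 0) * u $ b)"
          by (simp only: distrib_right sum.distrib)
        also have "(\<Sum>b\<in>UNIV. lam * \<delta>^2 * (if a = b then 1 else 0) * u $ b) = (\<Sum>b\<in>UNIV. if b = a then lam * \<delta>^2 * u $ a else 0)"
          by (rule sum.cong) auto
        also have "\<dots> = lam * \<delta>^2 * u $ a" by simp
        also have "(\<Sum>b\<in>UNIV. R $ a $ b * u $ b) = (R *v u) $ a"
          by (simp add: matrix_vector_mult_def)
        finally show ?thesis .
      qed
      have wl: "w k $ Inl a = u $ a" for a by (simp add: w_def u_def y_def)
      have wr: "w k $ Inr a = 0" for a by (simp add: w_def)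
      have t2: "(R2 R \<delta> lam *v w k) \<bullet> w k = (R *v u) \<bullet> u + lam * \<delta>^2 * (u \<bullet> u)"
      proof -
        have "(R2 R \<delta> lam *v w k) \<bullet> w k = (\<Sum>a\<in>UNIV. ((R *v u) $ a + lam * \<delta>^2 * u $ a) * u $ a)"
          by (simp only: inner_vec_def sum_Plus_UNIV Rw wl wr) simp
        also have "\<dots> = (R *v u) \<bullet> u + lam * \<delta>^2 * (u \<bullet> u)"
          by (simp add: inner_vec_def distrib_left distrib_right sum.distrib sum_distrib_left mult_ac)
        finally show ?thesis .
      qed
      have "0 \<le> y \<bullet> ((Q + (transpose S ** N + transpose N ** S) + transpose N ** R ** N) *v y)"
        using P unfolding psd_def by blast
      also have "\<dots> = (Q *v y) \<bullet> y + 2 * ((S *v y) \<bullet> u) + (R *v u) \<bullet> u"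
        by (simp add: matrix_vector_mult_add_rdistrib matrix_vector_mul_assoc[symmetric]
            inner_add_right inner_transpose inner_vmul u_def inner_commute)
      finally have "0 \<le> (Q *v y) \<bullet> y + 2 * ((S *v y) \<bullet> u) + (R *v u) \<bullet> u" .
      moreover have "0 \<le> lam * \<delta>^2 * (u \<bullet> u)" using lam by simp
      ultimately show ?thesis unfolding t1 t2 y_def[symmetric] by linarith
    qed
    have iqc: "IQC Q (S2 S) (R2 R \<delta> lam) \<rho> x w"
      unfolding IQC_def using tnn by (intro allI sum_nonneg mult_nonneg_nonneg) auto
    have conv: "(\<lambda>k. inverse (\<rho> ^ k) *\<^sub>R x k) \<longlonglongrightarrow> 0"
      unfolding x_def Cr_def by (rule decay_real[OF N assms(3)])
    show "\<exists>x w. behav A (B2 B) x w \<and> IQC Q (S2 S) (R2 R \<delta> lam) \<rho> x w \<and> x 0 = x0 \<and>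
        ((\<lambda>k. inverse (\<rho> ^ k) *\<^sub>R x k) \<longlonglongrightarrow> 0)"
      using beh iqc conv by (intro exI[of _ x] exI[of _ w]) (simp add: x_def)
  qed
qed
end
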